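(* Let $\{|\tilde\psi(l)\rangle\}$ be a projectively continuous path of normalized states, and let $\tilde L(l)$ denote the length of the path $\{|\tilde\psi(l')\rangle\}_{0\le l'\le l}$. Suppose $\tilde L$ is Lipschitz continuous, and for $l_1<l_2$ set $\omega(l_1,l_2)=\sup_{l_1\le l'<l''\le l_2}(\tilde L(l'')-\tilde L(l'))/(l''-l')$. Then for $\delta>0$ (with $l,l+\delta$ in the parameter domain), $$|\langle\tilde\psi(l+\delta)|\tilde\psi(l)\rangle|^2\ \ge\ 1-\omega(l,l+\delta)^2\delta^2.$$
   Context: For states $|\phi_1\rangle,|\phi_2\rangle$, the angular distance is $\Theta(|\phi_1\rangle,|\phi_2\rangle)=\arccos|\langle\phi_2|\phi_1\rangle|$. The length of a projectively continuous path $|\phi(x)\rangle$, $x\in[a,b]$, is $\sup\sum_k\Theta(|\phi(x_{k+1})\rangle,|\phi(x_k)\rangle)$ over all finite subdivisions $a=x_0<\dots<x_m=b$. *)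

theory Defs
  imports "HOL-Analysis.Analysis"
begin

text \<open>States of a Hilbert space are modelled as square-summable families
  indexed by an arbitrary type 'i (every Hilbert space is isomorphic to some l2(I)).\<close>

definition sq_summable :: "('i \<Rightarrow> complex) \<Rightarrow> bool" where
  "sq_summable \<phi> \<longleftrightarrow> (\<lambda>i. (cmod (\<phi> i))\<^sup>2) summable_on UNIV"

definition braket :: "('i \<Rightarrow> complex) \<Rightarrow> ('i \<Rightarrow> complex) \<Rightarrow> complex" where
  "braket \<phi> \<psi> = (\<Sum>\<^sub>\<infinity> i. cnj (\<phi> i) * \<psi> i)"

definition normalized :: "('i \<Rightarrow> complex) \<Rightarrow> bool" where
  "normalized \<phi> \<longleftrightarrow> sq_summable \<phi> \<and> braket \<phi> \<phi> = 1"

definition ang_dist :: "('i \<Rightarrow> complex) \<Rightarrow> ('i \<Rightarrow> complex) \<Rightarrow> real" where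
  "ang_dist \<phi>1 \<phi>2 = arccos (cmod (braket \<phi>2 \<phi>1))"

definition proj_continuous_on :: "real set \<Rightarrow> (real \<Rightarrow> 'i \<Rightarrow> complex) \<Rightarrow> bool" where
  "proj_continuous_on S \<psi> \<longleftrightarrow>
     (\<forall>x\<in>S. ((\<lambda>y. ang_dist (\<psi> y) (\<psi> x)) \<longlongrightarrow> 0) (at x within S))"

definition path_length :: "(real \<Rightarrow> 'i \<Rightarrow> complex) \<Rightarrow> real \<Rightarrow> real \<Rightarrow> ereal" where
  "path_length \<psi> a b =
     Sup {ereal (\<Sum>k<m. ang_dist (\<psi> (x (Suc k))) (\<psi> (x k))) | m x.
            x 0 = a \<and> x m = b \<and> (\<forall>k<m. x k < x (Suc k))}"

end

theory Submission
  imports Defs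
begin

lemma braket_sym_cmod: "cmod (braket a b) = cmod (braket b a)"
proof -
  have "braket a b = cnj (braket b a)"
  proof -
    have "cnj (braket b a) = (\<Sum>\<^sub>\<infinity> i. cnj (cnj (b i) * a i))"
      unfolding braket_def by (rule infsum_cnj[symmetric])
    also have "\<dots> = braket a b" unfolding braket_def
      by (simp add: mult.commute)
    finally show ?thesis by simp
  qed
  thus ?thesis by simp
qed

lemma length_step:
  assumes len: "\<forall>x\<in>{0..T}. path_length \<psi> 0 x = ereal (L x)"
    and "\<delta> > 0" and "0 \<le> l" and "l + \<delta> \<le> T"
  shows "L l + ang_dist (\<psi> (l + \<delta>)) (\<psi> l) \<le> L (l + \<delta>)"
proof -
  let ?A = "ang_dist (\<psi> (l + \<delta>)) (\<psi> l)"
  have "path_length \<psi> 0 l \<le> ereal (L (l + \<delta>) - ?A)"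
    unfolding path_length_def
  proof (rule Sup_least)
    fix z assume "z \<in> {ereal (\<Sum>k<m. ang_dist (\<psi> (x (Suc k))) (\<psi> (x k))) | m x.
            x 0 = 0 \<and> x m = l \<and> (\<forall>k<m. x k < x (Suc k))}"
    then obtain m x where z: "z = ereal (\<Sum>k<m. ang_dist (\<psi> (x (Suc k))) (\<psi> (x k)))"
      and x0: "x 0 = (0::real)" and xm: "x m = l" and inc: "\<forall>k<m. x k < x (Suc k)" by blast
    define y where "y = x(Suc m := l + \<delta>)"
    have y0: "y 0 = 0" using x0 by (simp add: y_def)
    have ym: "y (Suc m) = l + \<delta>" by (simp add: y_def)
    have yinc: "\<forall>k<Suc m. y k < y (Suc k)"
    proof (intro allI impI)
      fix k assume "k < Suc m"
      then consider "k < m" | "k = m" by linarith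
      thus "y k < y (Suc k)"
      proof cases
        case 1 thus ?thesis using inc by (simp add: y_def)
      next
        case 2 thus ?thesis using xm \<open>\<delta> > 0\<close> by (simp add: y_def)
      qed
    qed
    have "ereal (\<Sum>k<Suc m. ang_dist (\<psi> (y (Suc k))) (\<psi> (y k))) \<in>
      {ereal (\<Sum>k<m. ang_dist (\<psi> (x (Suc k))) (\<psi> (x k))) | m x.
            x 0 = 0 \<and> x m = l + \<delta> \<and> (\<forall>k<m. x k < x (Suc k))}"
      using y0 ym yinc by blast
    hence "ereal (\<Sum>k<Suc m. ang_dist (\<psi> (y (Suc k))) (\<psi> (y k))) \<le> path_length \<psi> 0 (l + \<delta>)"
      unfolding path_length_def by (rule Sup_upper)
    also have "\<dots> = ereal (L (l + \<delta>))" using len assms by auto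
    finally have 1: "(\<Sum>k<Suc m. ang_dist (\<psi> (y (Suc k))) (\<psi> (y k))) \<le> L (l + \<delta>)" by simp
    have "(\<Sum>k<Suc m. ang_dist (\<psi> (y (Suc k))) (\<psi> (y k)))
        = (\<Sum>k<m. ang_dist (\<psi> (x (Suc k))) (\<psi> (x k))) + ?A"
    proof -
      have "(\<Sum>k<m. ang_dist (\<psi> (y (Suc k))) (\<psi> (y k))) = (\<Sum>k<m. ang_dist (\<psi> (x (Suc k))) (\<psi> (x k)))"
        by (rule sum.cong) (auto simp: y_def)
      moreover have "y m = l" by (simp add: y_def xm)
      ultimately show ?thesis using ym by simp
    qed
    thus "z \<le> ereal (L (l + \<delta>) - ?A)"
      using 1 z by simp
  qed
  moreover have "path_length \<psi> 0 l = ereal (L l)" using len assms by auto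
  ultimately show ?thesis by simp
qed

theorem lemma7:
  fixes \<psi> :: "real \<Rightarrow> 'i \<Rightarrow> complex" and L :: "real \<Rightarrow> real"
    and T l \<delta> :: real
  assumes norm: "\<forall>x\<in>{0..T}. normalized (\<psi> x)"
    and cont: "proj_continuous_on {0..T} \<psi>"
    and len: "\<forall>x\<in>{0..T}. path_length \<psi> 0 x = ereal (L x)"
    and lip: "\<exists>K. K-lipschitz_on {0..T} L"
    and "\<delta> > 0" and "0 \<le> l" and "l + \<delta> \<le> T"
  shows "(cmod (braket (\<psi> (l + \<delta>)) (\<psi> l)))\<^sup>2 \<ge>
           1 - (Sup {(L l'' - L l') / (l'' - l') | l' l''. l \<le> l' \<and> l' < l'' \<and> l'' \<le> l + \<delta>})\<^sup>2
               * \<delta>\<^sup>2"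
proof -
  define S where "S = {(L l'' - L l') / (l'' - l') | l' l''. l \<le> l' \<and> l' < l'' \<and> l'' \<le> l + \<delta>}"
  define c where "c = cmod (braket (\<psi> (l + \<delta>)) (\<psi> l))"
  have "c\<^sup>2 \<ge> 1 - (Sup S)\<^sup>2 * \<delta>\<^sup>2"
  proof (cases "c \<ge> 1")
    case True
    hence "c\<^sup>2 \<ge> 1" by (simp add: one_le_power)
    moreover have "(Sup S)\<^sup>2 * \<delta>\<^sup>2 \<ge> 0" by simp
    ultimately show ?thesis by linarith
  next
    case False
    have c0: "c \<ge> 0" by (simp add: c_def)
    define \<Theta> where "\<Theta> = ang_dist (\<psi> (l + \<delta>)) (\<psi> l)"
    have \<Theta>: "\<Theta> = arccos c" unfolding \<Theta>_def ang_dist_def c_def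
      by (simp add: braket_sym_cmod)
    have T0: "\<Theta> \<ge> 0" using \<Theta> c0 False by (simp add: arccos_lbound)
    have cosT: "cos \<Theta> = c" using \<Theta> c0 False by (simp add: cos_arccos)
    have step: "L l + \<Theta> \<le> L (l + \<delta>)" unfolding \<Theta>_def
      using length_step[OF len] assms by blast
    obtain K where K: "K-lipschitz_on {0..T} L" using lip by blast
    have bdd: "bdd_above S" unfolding S_def
    proof (rule bdd_aboveI[where M=K], clarify)
      fix a b :: real assume h: "l \<le> a" "a < b" "b \<le> l + \<delta>"
      have "dist (L b) (L a) \<le> K * dist b a"
        by (rule lipschitz_onD[OF K]) (use h assms in auto)
      hence "L b - L a \<le> K * (b - a)" using h by (simp add: dist_real_def)
      thus "(L b - L a) / (b - a) \<le> K" using h by (simp add: divide_le_eq)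
    qed
    have mem: "(L (l + \<delta>) - L l) / ((l + \<delta>) - l) \<in> S" unfolding S_def
      using assms by fastforce
    have "(L (l + \<delta>) - L l) / \<delta> \<le> Sup S" using cSup_upper[OF mem bdd] by simp
    hence "L (l + \<delta>) - L l \<le> Sup S * \<delta>" using assms by (simp add: divide_le_eq)
    hence le: "\<Theta> \<le> Sup S * \<delta>" using step by linarith
    have "\<Theta>\<^sup>2 \<le> (Sup S * \<delta>)\<^sup>2" using le T0 by (simp add: power_mono)
    moreover have "(sin \<Theta>)\<^sup>2 \<le> \<Theta>\<^sup>2"
      using abs_sin_x_le_abs_x[of \<Theta>] by (metis abs_ge_zero power2_abs power_mono)
    moreover have "c\<^sup>2 = 1 - (sin \<Theta>)\<^sup>2"
    proof -
      have "c\<^sup>2 = (cos \<Theta>)\<^sup>2" using cosT by simp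
      thus ?thesis using sin_cos_squared_add[of \<Theta>] by linarith
    qed
    ultimately show ?thesis by (simp add: power_mult_distrib)
  qed
  thus ?thesis by (simp add: S_def c_def)
qed

end
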